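(* Let $G$ be a graph with at least one isolated vertex, let $T$ be a (possibly empty) minimum twin cover of $G$, and let $t\ge1$. (i) If $G=K_1$, then $\det(G)=0$ and $\det(\mu_t(G))=t$. (ii) If $G\ne K_1$, then $\det(\mu_t(G))=t|T|+\det(G)+t-1$.
   Context: All graphs are finite and simple. For a graph $G$ with $V(G)=\{v_1,\dots,v_n\}$ and an integer $t\ge1$, the generalized Mycielskian $\mu_t(G)$ has vertex set $\{u_i^s: 1\le i\le n,\ 0\le s\le t\}\cup\{w\}$, where $u_i^0$ is identified with $v_i$. Its edges are: $u_i^0u_j^0$ for each edge $v_iv_j$ of $G$; $u_i^su_j^{s+1}$ and $u_j^su_i^{s+1}$ for each edge $v_iv_j$ of $G$ and each $0\le s<t$; and $u_i^tw$ for all $1\le i\le n$. A set $S\subseteq V(G)$ is a determining set for $G$ if the only automorphism of $G$ fixing every vertex of $S$ is the identity; $\det(G)$ is the minimum size of a determining set. Two vertices are twins if they have the same open neighborhood. A minimum twin cover of a graph is a subset of its vertices of minimum size that contains at least one vertex from every pair of distinct twin vertices; it is empty if the graph has no twins. *)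

theory Defs
  imports Main
begin

definition simple_graph :: "'a set \<Rightarrow> 'a set set \<Rightarrow> bool" where
  "simple_graph V E \<longleftrightarrow> finite V \<and>
     (\<forall>e\<in>E. \<exists>u v. u \<noteq> v \<and> u \<in> V \<and> v \<in> V \<and> e = {u, v})"

definition isolated_vertex :: "'a set \<Rightarrow> 'a set set \<Rightarrow> 'a \<Rightarrow> bool" where
  "isolated_vertex V E v \<longleftrightarrow> v \<in> V \<and> (\<forall>u\<in>V. {u, v} \<notin> E)"

definition graph_aut :: "'a set \<Rightarrow> 'a set set \<Rightarrow> ('a \<Rightarrow> 'a) \<Rightarrow> bool" where
  "graph_aut V E f \<longleftrightarrow> bij_betw f V V \<and>
     (\<forall>u\<in>V. \<forall>v\<in>V. {u, v} \<in> E \<longleftrightarrow> {f u, f v} \<in> E)"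

definition determining_set :: "'a set \<Rightarrow> 'a set set \<Rightarrow> 'a set \<Rightarrow> bool" where
  "determining_set V E S \<longleftrightarrow> S \<subseteq> V \<and>
     (\<forall>f. graph_aut V E f \<and> (\<forall>x\<in>S. f x = x) \<longrightarrow> (\<forall>x\<in>V. f x = x))"

definition det_num :: "'a set \<Rightarrow> 'a set set \<Rightarrow> nat" where
  "det_num V E = Min {card S | S. determining_set V E S}"

definition open_nbhd :: "'a set \<Rightarrow> 'a set set \<Rightarrow> 'a \<Rightarrow> 'a set" where
  "open_nbhd V E v = {u \<in> V. {u, v} \<in> E}"

definition twins :: "'a set \<Rightarrow> 'a set set \<Rightarrow> 'a \<Rightarrow> 'a \<Rightarrow> bool" where
  "twins V E u v \<longleftrightarrow> u \<in> V \<and> v \<in> V \<and> open_nbhd V E u = open_nbhd V E v"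

definition twin_cover :: "'a set \<Rightarrow> 'a set set \<Rightarrow> 'a set \<Rightarrow> bool" where
  "twin_cover V E T \<longleftrightarrow> T \<subseteq> V \<and>
     (\<forall>u v. u \<noteq> v \<and> twins V E u v \<longrightarrow> u \<in> T \<or> v \<in> T)"

definition min_twin_cover :: "'a set \<Rightarrow> 'a set set \<Rightarrow> 'a set \<Rightarrow> bool" where
  "min_twin_cover V E T \<longleftrightarrow> twin_cover V E T \<and>
     (\<forall>T'. twin_cover V E T' \<longrightarrow> card T \<le> card T')"

text \<open>Generalized Mycielskian. Vertex u_i^s is represented as Some (v_i, s),
and the extra vertex w as None; u_i^0 = Some (v_i, 0) plays the role of v_i.\<close>

definition myc_vertices :: "nat \<Rightarrow> 'a set \<Rightarrow> ('a \<times> nat) option set" where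
  "myc_vertices t V = {Some (v, s) | v s. v \<in> V \<and> s \<le> t} \<union> {None}"

definition myc_edges :: "nat \<Rightarrow> 'a set \<Rightarrow> 'a set set \<Rightarrow> ('a \<times> nat) option set set" where
  "myc_edges t V E =
     {{Some (u, 0), Some (v, 0)} | u v. {u, v} \<in> E}
   \<union> {{Some (u, s), Some (v, Suc s)} | u v s. {u, v} \<in> E \<and> s < t}
   \<union> {{Some (u, t), None} | u. u \<in> V}"

end

theory Submission
  imports Defs
begin


lemma aut_edge: "graph_aut V E f \<Longrightarrow> x\<in>V \<Longrightarrow> y\<in>V \<Longrightarrow> {f x, f y}\<in>E \<longleftrightarrow> {x,y}\<in>E"
  unfolding graph_aut_def by blast
lemma aut_in: "graph_aut V E f \<Longrightarrow> x\<in>V \<Longrightarrow> f x \<in> V"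
  unfolding graph_aut_def bij_betw_def by blast
lemma aut_inj: "graph_aut V E f \<Longrightarrow> inj_on f V"
  unfolding graph_aut_def bij_betw_def by blast
lemma aut_surj: "graph_aut V E f \<Longrightarrow> y\<in>V \<Longrightarrow> \<exists>x\<in>V. f x = y"
  unfolding graph_aut_def bij_betw_def by (metis imageE)

definition sw :: "'a \<Rightarrow> 'a \<Rightarrow> 'a \<Rightarrow> 'a" where
  "sw x y z = (if z = x then y else if z = y then x else z)"

lemma swap_aut:
  assumes "x\<in>V" "y\<in>V" "\<forall>z\<in>V-{x,y}. ({z,x}\<in>E \<longleftrightarrow> {z,y}\<in>E)" "\<forall>z. {z}\<notin>E"
  shows "graph_aut V E (sw x y)"
  unfolding graph_aut_def
proof
  show "bij_betw (sw x y) V V"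
    by (rule bij_betw_byWitness[where f'="sw x y"]) (auto simp: sw_def assms)
  have c: "\<And>a b. {a,b} = {b,a}" by auto
  have z: "\<And>z. z\<in>V \<Longrightarrow> z\<noteq>x \<Longrightarrow> z\<noteq>y \<Longrightarrow> {x,z}\<in>E \<longleftrightarrow> {y,z}\<in>E"
    using assms(3) c by (metis Diff_iff insertE empty_iff)
  have one: "{sw x y u, sw x y v} \<in> E" if uv: "u\<in>V" "v\<in>V" "{u,v}\<in>E" for u v
  proof -
    have "u \<noteq> v" using uv assms(4) by auto
    show ?thesis
    proof (cases "u=x \<or> u=y")
      case True
      show ?thesis
      proof (cases "v=x \<or> v=y")
        case True
        then have "{sw x y u, sw x y v} = {u,v}" using \<open>u\<noteq>v\<close> \<open>u=x \<or> u=y\<close> unfolding sw_def by auto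
        then show ?thesis using uv by simp
      next
        case False
        then have sv: "sw x y v = v" unfolding sw_def by auto
        show ?thesis
        proof (cases "u=x")
          case True
          then have "sw x y u = y" unfolding sw_def by simp
          then show ?thesis using sv z[of v] uv True False by auto
        next
          case False
          then have "u = y" "sw x y u = x" using \<open>u=x \<or> u=y\<close> unfolding sw_def by auto
          then show ?thesis using sv z[of v] uv \<open>\<not>(v=x \<or> v=y)\<close> by auto
        qed
      qed
    next
      case False
      then have su: "sw x y u = u" unfolding sw_def by auto
      show ?thesis
      proof (cases "v=x")
        case True
        then have "sw x y v = y" unfolding sw_def by simp
        then show ?thesis using su z[of u] uv True False c by metis
      next
        case nx: False
        show ?thesis
        proof (cases "v=y")
          case True
          then have "sw x y v = x" using nx unfolding sw_def by simp
          then show ?thesis using su z[of u] uv True False c by metis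
        next
          case False
          then have "sw x y v = v" using nx unfolding sw_def by simp
          then show ?thesis using su uv by simp
        qed
      qed
    qed
  qed
  have inv: "\<And>u. sw x y (sw x y u) = u" unfolding sw_def by auto
  have inV: "\<And>u. u\<in>V \<Longrightarrow> sw x y u \<in> V" using assms unfolding sw_def by auto
  show "\<forall>u\<in>V. \<forall>v\<in>V. ({u, v} \<in> E) = ({sw x y u, sw x y v} \<in> E)"
    using one inv inV by metis
qed

lemma det_cover:
  assumes "determining_set V E S" "x\<in>V" "y\<in>V" "x\<noteq>y"
    "\<forall>z\<in>V-{x,y}. ({z,x}\<in>E \<longleftrightarrow> {z,y}\<in>E)" "\<forall>z. {z}\<notin>E"
  shows "x\<in>S \<or> y\<in>S"
proof (rule ccontr)
  assume n: "\<not>(x\<in>S \<or> y\<in>S)"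
  have a: "graph_aut V E (sw x y)" using swap_aut assms by metis
  have "\<forall>z\<in>S. sw x y z = z" using n by (auto simp: sw_def)
  then have "\<forall>z\<in>V. sw x y z = z" using a assms(1) unfolding determining_set_def by blast
  then show False using assms by (auto simp: sw_def)
qed

lemma cover_card:
  assumes "finite A" "\<forall>x\<in>A. \<forall>y\<in>A. x\<noteq>y \<longrightarrow> x\<in>S \<or> y\<in>S"
  shows "card A \<le> card (A\<inter>S) + 1"
proof -
  have "card (A - S) \<le> 1"
    using assms by (auto simp: card_le_Suc0_iff_eq[OF finite_Diff])
  moreover have "card A = card (A\<inter>S) + card (A - S)"
    using assms(1) card_Un_disjoint[of "A\<inter>S" "A-S"] by (simp add: Int_Diff_Un Diff_triv Int_Diff) (metis Diff_disjoint Int_Diff Int_Diff_Un inf_commute inf_left_idem)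
  ultimately show ?thesis by simp
qed

lemma fix_unique:
  assumes "\<forall>x\<in>A. f x \<in> A" "inj_on f A" "\<forall>x\<in>A.\<forall>y\<in>A. x\<noteq>y \<longrightarrow> f x = x \<or> f y = y" "x\<in>A"
  shows "f x = x"
proof (rule ccontr)
  assume n: "f x \<noteq> x"
  have "f x \<in> A" using assms by blast
  then have "f (f x) = f x" using assms n by blast
  then show False using assms n \<open>f x \<in> A\<close> unfolding inj_on_def by blast
qed

lemma det_fin: "finite V \<Longrightarrow> finite {card S | S. determining_set V E S}"
proof -
  assume "finite V"
  have "{card S | S. determining_set V E S} \<subseteq> card ` Pow V"
    unfolding determining_set_def by auto
  then show ?thesis using \<open>finite V\<close> finite_subset by blast
qed

lemma det_V: "determining_set V E V" unfolding determining_set_def by auto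

lemma det_le: "finite V \<Longrightarrow> determining_set V E S \<Longrightarrow> det_num V E \<le> card S"
  unfolding det_num_def by (rule Min_le) (auto intro: det_fin)

lemma det_ge: "(\<And>S. determining_set V E S \<Longrightarrow> n \<le> card S) \<Longrightarrow> finite V \<Longrightarrow> n \<le> det_num V E"
  unfolding det_num_def using det_V[of V E]
  by (subst Min_ge_iff) (auto intro: det_fin)

lemma det_ex: "finite V \<Longrightarrow> \<exists>D. determining_set V E D \<and> card D = det_num V E"
proof -
  assume f: "finite V"
  have "det_num V E \<in> {card S | S. determining_set V E S}"
    unfolding det_num_def using det_V[of V E] by (intro Min_in det_fin f) auto
  then show ?thesis by auto
qed



locale myc =
  fixes V :: "'a set" and E :: "'a set set" and t :: nat
  assumes sg: "simple_graph V E" and t1: "t \<ge> 1"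
begin

abbreviation VM where "VM \<equiv> myc_vertices t V"
abbreviation EM where "EM \<equiv> myc_edges t V E"

lemma finV: "finite V" using sg unfolding simple_graph_def by auto

lemma E_in: "{u,v}\<in>E \<Longrightarrow> u\<in>V \<and> v\<in>V \<and> u\<noteq>v"
  using sg unfolding simple_graph_def doubleton_eq_iff by (metis doubleton_eq_iff)

lemma E_noloop: "{z}\<notin>E" using E_in[of z z] by auto

lemma VM_eq: "VM = Some ` (V \<times> {..t}) \<union> {None}"
  unfolding myc_vertices_def by auto

lemma finVM: "finite VM" unfolding VM_eq using finV by auto

lemma Some_VM[simp]: "Some (v,s) \<in> VM \<longleftrightarrow> v\<in>V \<and> s\<le>t"
  unfolding myc_vertices_def by auto
lemma None_VM[simp]: "None \<in> VM"
  unfolding myc_vertices_def by auto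

lemma EM_SS: "{Some(u,r), Some(v,s)} \<in> EM \<longleftrightarrow>
   {u,v}\<in>E \<and> ((r=0 \<and> s=0) \<or> (s = Suc r \<and> r < t) \<or> (r = Suc s \<and> s < t))"
proof
  assume "{Some(u,r), Some(v,s)} \<in> EM"
  then show "{u,v}\<in>E \<and> ((r=0 \<and> s=0) \<or> (s = Suc r \<and> r < t) \<or> (r = Suc s \<and> s < t))"
    unfolding myc_edges_def by (auto simp: doubleton_eq_iff insert_commute)
next
  assume a: "{u,v}\<in>E \<and> ((r=0 \<and> s=0) \<or> (s = Suc r \<and> r < t) \<or> (r = Suc s \<and> s < t))"
  have c: "{v,u}\<in>E" using a by (simp add: insert_commute)
  show "{Some(u,r), Some(v,s)} \<in> EM"
    using a c unfolding myc_edges_def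
    by (elim conjE disjE) (blast, blast, force simp: insert_commute)
qed

lemma EM_SN: "{Some(u,r), None} \<in> EM \<longleftrightarrow> u\<in>V \<and> r = t"
  unfolding myc_edges_def by (auto simp: doubleton_eq_iff)

lemma EM_NS: "{None, Some(u,r)} \<in> EM \<longleftrightarrow> u\<in>V \<and> r = t"
  using EM_SN by (simp add: insert_commute)

lemma EM_noloop: "{z} \<notin> EM"
  unfolding myc_edges_def using E_noloop by (auto simp: doubleton_eq_iff)

lemma EM_NN: "{None, None} \<notin> EM" using EM_noloop by simp

end


lemma twins_iff: "twins V E u v \<longleftrightarrow> u\<in>V \<and> v\<in>V \<and> (\<forall>a\<in>V. {a,u}\<in>E \<longleftrightarrow> {a,v}\<in>E)"
  unfolding twins_def open_nbhd_def by blast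

locale myc2 = myc +
  fixes T :: "'a set"
  assumes isoex: "\<exists>v. isolated_vertex V E v"
    and minT: "min_twin_cover V E T"
    and cardV: "card V \<noteq> 1"
begin

definition I where "I = {v\<in>V. \<forall>u\<in>V. {u,v}\<notin>E}"

lemma I_sub: "I \<subseteq> V" unfolding I_def by auto
lemma finI: "finite I" using I_sub finV finite_subset by blast
lemma Ine: "I \<noteq> {}" using isoex unfolding I_def isolated_vertex_def by auto

lemma nonisoE: "v\<in>V \<Longrightarrow> v\<notin>I \<Longrightarrow> \<exists>u. {u,v}\<in>E"
  unfolding I_def by auto

lemma isoE: "v\<in>I \<Longrightarrow> {u,v}\<notin>E"
  unfolding I_def using E_in by blast

lemma isoE': "v\<in>I \<Longrightarrow> {v,u}\<notin>E"
  using isoE by (metis insert_commute)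

lemma V2: "\<exists>a b. a\<in>V \<and> b\<in>V \<and> a\<noteq>b"
proof -
  have "V \<noteq> {}" using Ine I_sub by auto
  then obtain a where a: "a\<in>V" by auto
  have "V \<noteq> {a}" using cardV by auto
  then obtain b where "b\<in>V" "b\<noteq>a" using a by auto
  then show ?thesis using a by auto
qed

lemma I_twins: "i\<in>I \<Longrightarrow> j\<in>I \<Longrightarrow> twins V E i j"
  unfolding twins_iff using I_sub isoE by blast

lemma cover_I: "twin_cover V E X \<Longrightarrow> i\<in>I \<Longrightarrow> j\<in>I \<Longrightarrow> i\<noteq>j \<Longrightarrow> i\<in>X \<or> j\<in>X"
  unfolding twin_cover_def using I_twins by blast

lemma T_cover: "twin_cover V E T" using minT unfolding min_twin_cover_def by auto
lemma T_sub: "T \<subseteq> V" using T_cover unfolding twin_cover_def by auto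
lemma finT: "finite T" using T_sub finV finite_subset by blast

lemma c_ex: "\<exists>c. c\<in>I \<and> c\<notin>T \<and> (\<forall>i\<in>I. i\<notin>T \<longrightarrow> i = c)"
proof -
  have "\<not> I \<subseteq> T"
  proof
    assume sub: "I \<subseteq> T"
    obtain c where c: "c\<in>I" using Ine by auto
    have "twin_cover V E (T - {c})"
      unfolding twin_cover_def
    proof (intro conjI allI impI)
      show "T - {c} \<subseteq> V" using T_sub by auto
      fix u v assume uv: "u \<noteq> v \<and> twins V E u v"
      then have "u\<in>T \<or> v\<in>T" using T_cover unfolding twin_cover_def by blast
      moreover have "u = c \<Longrightarrow> v \<in> I" using uv c unfolding twins_iff I_def by blast
      moreover have "v = c \<Longrightarrow> u \<in> I" using uv c unfolding twins_iff I_def by blast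
      ultimately show "u \<in> T - {c} \<or> v \<in> T - {c}" using sub uv by auto
    qed
    then have "card T \<le> card (T - {c})" using minT unfolding min_twin_cover_def by blast
    moreover have "card (T - {c}) < card T" using c sub finT by (meson card_Diff1_less in_mono)
    ultimately show False by simp
  qed
  then obtain c where c: "c\<in>I" "c\<notin>T" by auto
  moreover have "\<forall>i\<in>I. i\<notin>T \<longrightarrow> i = c" using cover_I[OF T_cover] c by blast
  ultimately show ?thesis by blast
qed

lemma iso_mu: "i\<in>I \<Longrightarrow> s<t \<Longrightarrow> z\<in>VM \<Longrightarrow> {z, Some(i,s)} \<notin> EM"
  using I_sub unfolding myc_vertices_def by (auto simp: EM_SS EM_NS isoE' isoE)

lemma pend_mu: "i\<in>I \<Longrightarrow> z\<in>VM \<Longrightarrow> {z, Some(i,t)}\<in>EM \<longleftrightarrow> z = None"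
  using I_sub unfolding myc_vertices_def by (auto simp: EM_SS EM_NS isoE' isoE)

lemma lvl_twin: "u\<in>V \<Longrightarrow> v\<in>V \<Longrightarrow> (\<forall>a\<in>V. {a,u}\<in>E \<longleftrightarrow> {a,v}\<in>E) \<Longrightarrow> z\<in>VM \<Longrightarrow>
   {z,Some(u,s)}\<in>EM \<longleftrightarrow> {z,Some(v,s)}\<in>EM"
  unfolding myc_vertices_def by (auto simp: EM_SS EM_NS)

lemma noNbr_char:
  assumes "x\<in>VM" "\<forall>z\<in>VM. {z,x}\<notin>EM"
  shows "\<exists>i s. x = Some(i,s) \<and> i\<in>I \<and> s<t"
proof (cases x)
  case None
  obtain a where "a\<in>V" using V2 by auto
  then have "{Some(a,t), x}\<in>EM" using None EM_SN by simp
  then show ?thesis using assms \<open>a\<in>V\<close> by auto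
next
  case (Some p)
  then obtain v s where x: "x = Some(v,s)" by (cases p) auto
  then have vs: "v\<in>V" "s\<le>t" using assms by auto
  have "s \<noteq> t" using assms(2)[rule_format, OF None_VM] x EM_NS vs by auto
  moreover have "v\<in>I"
  proof (rule ccontr)
    assume "v\<notin>I"
    then obtain u where u: "{u,v}\<in>E" using nonisoE vs by auto
    then have "{Some(u,Suc s), x}\<in>EM" using x \<open>s\<noteq>t\<close> vs EM_SS by auto
    moreover have "Some(u,Suc s)\<in>VM" using u E_in \<open>s\<noteq>t\<close> vs by auto
    ultimately show False using assms by auto
  qed
  ultimately show ?thesis using x vs by auto
qed

lemma nbr2:
  assumes "v\<in>V" "v\<notin>I" "s\<le>t"
  shows "\<exists>y1 y2. y1\<in>VM \<and> y2\<in>VM \<and> y1\<noteq>y2 \<and> {y1,Some(v,s)}\<in>EM \<and> {y2,Some(v,s)}\<in>EM"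
proof -
  obtain u where u: "{u,v}\<in>E" using nonisoE assms by auto
  then have uV: "u\<in>V" using E_in by auto
  have uv: "{v,u}\<in>E" using u by (simp add: insert_commute)
  show ?thesis
  proof (cases "s = t")
    case True
    then have "{Some(u,t-1),Some(v,s)}\<in>EM" using u t1 EM_SS by auto
    moreover have "{None,Some(v,s)}\<in>EM" using True EM_NS assms by auto
    ultimately show ?thesis using uV t1 by (intro exI[of _ "Some(u,t-1)"] exI[of _ None]) auto
  next
    case False
    then have a: "{Some(u,Suc s),Some(v,s)}\<in>EM" using u assms EM_SS by auto
    show ?thesis
    proof (cases s)
      case 0
      then have "{Some(u,0),Some(v,s)}\<in>EM" using u EM_SS by auto
      then show ?thesis using a uV False assms 0
        by (intro exI[of _ "Some(u,Suc s)"] exI[of _ "Some(u,0)"]) auto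
    next
      case (Suc r)
      then have "{Some(u,r),Some(v,s)}\<in>EM" using u EM_SS False assms by auto
      then show ?thesis using a uV False assms Suc
        by (intro exI[of _ "Some(u,Suc s)"] exI[of _ "Some(u,r)"]) auto
    qed
  qed
qed

lemma pend_char:
  assumes "x\<in>VM" "\<forall>z\<in>VM. {z,x}\<in>EM \<longleftrightarrow> z=None"
  shows "\<exists>i. x = Some(i,t) \<and> i\<in>I"
proof (cases x)
  case None
  then show ?thesis using assms(2)[rule_format, OF None_VM] EM_NN by simp
next
  case (Some p)
  then obtain v s where x: "x = Some(v,s)" by (cases p) auto
  then have vs: "v\<in>V" "s\<le>t" using assms by auto
  have "{None, x}\<in>EM" using assms by auto
  then have st: "s = t" using x EM_NS by auto
  have "v\<in>I"
  proof (rule ccontr)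
    assume "v\<notin>I"
    then obtain y1 y2 where "y1\<in>VM \<and> y2\<in>VM \<and> y1\<noteq>y2 \<and> {y1,Some(v,s)}\<in>EM \<and> {y2,Some(v,s)}\<in>EM"
      using nbr2 vs by blast
    then show False using assms x by auto
  qed
  then show ?thesis using x st by auto
qed

lemma unique_nbr:
  assumes "x\<in>VM" "y\<in>VM" "\<forall>z\<in>VM. {z,x}\<in>EM \<longleftrightarrow> z=y"
  shows "y = None"
proof (cases x)
  case None
  obtain a b where ab: "a\<in>V" "b\<in>V" "a\<noteq>b" using V2 by auto
  then have "{Some(a,t),x}\<in>EM" "{Some(b,t),x}\<in>EM" using None EM_SN by auto
  then show ?thesis using assms ab by auto
next
  case (Some p)
  then obtain v s where x: "x = Some(v,s)" by (cases p) auto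
  then have vs: "v\<in>V" "s\<le>t" using assms by auto
  show ?thesis
  proof (cases "v\<in>I")
    case True
    have yx: "{y,x}\<in>EM" using assms by auto
    show ?thesis
    proof (cases "s<t")
      case True
      then show ?thesis using yx x iso_mu[OF \<open>v\<in>I\<close> True assms(2)] by simp
    next
      case False
      then have "s = t" using vs by simp
      then show ?thesis using yx x pend_mu[OF \<open>v\<in>I\<close> assms(2)] by simp
    qed
  next
    case False
    then obtain y1 y2 where "y1\<in>VM \<and> y2\<in>VM \<and> y1\<noteq>y2 \<and> {y1,Some(v,s)}\<in>EM \<and> {y2,Some(v,s)}\<in>EM"
      using nbr2 vs by blast
    then show ?thesis using assms x by auto
  qed
qed

end


context myc2 begin

lemma aut_EM: "graph_aut VM EM f \<Longrightarrow> x\<in>VM \<Longrightarrow> z\<in>VM \<Longrightarrow> {f z, f x}\<in>EM \<longleftrightarrow> {z,x}\<in>EM"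
  using aut_edge by metis

lemma upper_fix:
  assumes aut: "graph_aut VM EM f"
   and D: "determining_set V E D" and c: "c\<in>I" "c\<notin>T" "\<forall>i\<in>I. i\<notin>T \<longrightarrow> i = c"
   and fixD: "\<forall>v\<in>D. f(Some(v,0)) = Some(v,0)"
   and fixT: "\<forall>v\<in>T. \<forall>s. 1\<le>s \<and> s\<le>t \<longrightarrow> f(Some(v,s)) = Some(v,s)"
   and fixc: "\<forall>s. 1\<le>s \<and> s<t \<longrightarrow> f(Some(c,s)) = Some(c,s)"
  shows "\<forall>x\<in>VM. f x = x"
proof -
  have inj: "inj_on f VM" using aut_inj[OF aut] .
  have fin: "\<And>x. x\<in>VM \<Longrightarrow> f x \<in> VM" using aut_in[OF aut] .
  have surj: "\<And>y. y\<in>VM \<Longrightarrow> \<exists>x\<in>VM. f x = y" using aut_surj[OF aut] .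
  have injE: "\<And>x y. x\<in>VM \<Longrightarrow> y\<in>VM \<Longrightarrow> f x = f y \<Longrightarrow> x = y" using inj unfolding inj_on_def by blast
  define A where "A = {x\<in>VM. \<forall>z\<in>VM. {z,x}\<notin>EM}"
  have Amap: "\<forall>x\<in>A. f x \<in> A"
  proof
    fix x assume x: "x\<in>A"
    have "\<forall>z\<in>VM. {z,f x}\<notin>EM"
    proof
      fix z assume z: "z\<in>VM"
      then obtain z' where z': "z'\<in>VM" "f z' = z" using surj by blast
      then show "{z,f x}\<notin>EM" using aut_EM[OF aut, of x z'] x unfolding A_def by auto
    qed
    then show "f x \<in> A" using fin x unfolding A_def by auto
  qed
  have unfixed: "\<And>x. x\<in>A \<Longrightarrow> f x \<noteq> x \<Longrightarrow> \<exists>i. x = Some(i,0) \<and> i\<in>I \<and> i\<notin>D"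
  proof -
    fix x assume x: "x\<in>A" "f x \<noteq> x"
    obtain i s where ixs: "x = Some(i,s)" "i\<in>I" "s<t" using noNbr_char x unfolding A_def by blast
    have "s = 0"
    proof (rule ccontr)
      assume "s\<noteq>0"
      show False
      proof (cases "i\<in>T")
        case True
        then show False using fixT[rule_format, of i s] ixs x \<open>s\<noteq>0\<close> by simp
      next
        case False
        then have "i = c" using c ixs by blast
        then show False using fixc[rule_format, of s] ixs x \<open>s\<noteq>0\<close> by simp
      qed
    qed
    then show "\<exists>i. x = Some(i,0) \<and> i\<in>I \<and> i\<notin>D" using ixs x fixD by auto
  qed
  have Apairs: "\<forall>x\<in>A.\<forall>y\<in>A. x\<noteq>y \<longrightarrow> f x = x \<or> f y = y"
  proof (intro ballI impI)
    fix x y assume xy: "x\<in>A" "y\<in>A" "x\<noteq>y"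
    show "f x = x \<or> f y = y"
    proof (rule ccontr)
      assume "\<not>(f x = x \<or> f y = y)"
      then have "f x \<noteq> x" "f y \<noteq> y" by auto
      then obtain i j where ij: "x = Some(i,0)" "i\<in>I" "i\<notin>D" "y = Some(j,0)" "j\<in>I" "j\<notin>D"
        using unfixed[OF xy(1)] unfixed[OF xy(2)] by blast
      have "i\<noteq>j" using ij xy by auto
      have iV: "i\<in>V" "j\<in>V" using ij I_sub by auto
      have zz: "\<forall>z\<in>V-{i,j}. ({z,i}\<in>E \<longleftrightarrow> {z,j}\<in>E)" using isoE ij by blast
      have "i\<in>D \<or> j\<in>D"
        using det_cover[OF D iV \<open>i\<noteq>j\<close> zz] E_noloop by blast
      then show False using ij by auto
    qed
  qed
  have "A \<subseteq> VM" unfolding A_def by auto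
  then have Ainj: "inj_on f A" using inj_on_subset[OF inj] by blast
  have isofix: "\<And>i s. i\<in>I \<Longrightarrow> s<t \<Longrightarrow> f(Some(i,s)) = Some(i,s)"
  proof -
    fix i s assume ixs: "i\<in>I" "s<t"
    have "\<forall>z\<in>VM. {z,Some(i,s)}\<notin>EM" using iso_mu ixs by blast
    moreover have "Some(i,s)\<in>VM" using ixs I_sub by auto
    ultimately have "Some(i,s)\<in>A" unfolding A_def by blast
    then show "f(Some(i,s)) = Some(i,s)" using fix_unique[OF Amap Ainj Apairs] by blast
  qed
  have pct: "Some(c,t)\<in>VM" using c(1) I_sub by auto
  have nb: "\<And>p. p\<in>VM \<Longrightarrow> (\<forall>z\<in>VM. {z,p}\<in>EM \<longleftrightarrow> z=None) \<Longrightarrow> (\<forall>z\<in>VM. {z,f p}\<in>EM \<longleftrightarrow> z = f None)"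
  proof (intro ballI)
    fix p z assume p: "p\<in>VM" "\<forall>z\<in>VM. {z,p}\<in>EM \<longleftrightarrow> z=None" and z: "z\<in>VM"
    obtain z' where z': "z'\<in>VM" "f z' = z" using surj z by blast
    have "{z,f p}\<in>EM \<longleftrightarrow> {z',p}\<in>EM" using aut_EM[OF aut p(1) z'(1)] z' by simp
    also have "\<dots> \<longleftrightarrow> z' = None" using p z' by auto
    also have "\<dots> \<longleftrightarrow> z = f None" using z' injE[OF z'(1) None_VM] by auto
    finally show "{z,f p}\<in>EM \<longleftrightarrow> z = f None" .
  qed
  have "\<forall>z\<in>VM. {z, Some(c,t)}\<in>EM \<longleftrightarrow> z = None" using pend_mu[OF c(1)] by blast
  from nb[OF pct this] have "\<forall>z\<in>VM. {z,f (Some(c,t))}\<in>EM \<longleftrightarrow> z = f None" .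
  from unique_nbr[OF fin[OF pct] fin[OF None_VM] this] have fN: "f None = None" .
  have pendfix: "\<And>i. i\<in>I \<Longrightarrow> f(Some(i,t)) = Some(i,t)"
  proof -
    define B where "B = {x. \<exists>i\<in>I. x = Some(i,t)}"
    have BVM: "B \<subseteq> VM" unfolding B_def using I_sub by auto
    have Bmap: "\<forall>x\<in>B. f x \<in> B"
    proof
      fix x assume x: "x\<in>B"
      then obtain i where i: "i\<in>I" "x = Some(i,t)" unfolding B_def by blast
      then have xV: "x\<in>VM" using I_sub by auto
      have "\<forall>z\<in>VM. {z,x}\<in>EM \<longleftrightarrow> z=None" using pend_mu[OF i(1)] i(2) by blast
      from nb[OF xV this] have "\<forall>z\<in>VM. {z,f x}\<in>EM \<longleftrightarrow> z=None" unfolding fN .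
      from pend_char[OF fin[OF xV] this] show "f x \<in> B" unfolding B_def by blast
    qed
    have Binj: "inj_on f B" using inj_on_subset[OF inj BVM] .
    have Bpairs: "\<forall>x\<in>B.\<forall>y\<in>B. x\<noteq>y \<longrightarrow> f x = x \<or> f y = y"
    proof (intro ballI impI)
      fix x y assume xy: "x\<in>B" "y\<in>B" "x\<noteq>y"
      then obtain i j where ij: "x = Some(i,t)" "y = Some(j,t)" "i\<in>I" "j\<in>I" "i\<noteq>j" unfolding B_def by auto
      then have "i\<in>T \<or> j\<in>T" using c by blast
      then show "f x = x \<or> f y = y" using fixT[rule_format, of i t] fixT[rule_format, of j t] t1 ij by blast
    qed
    fix i assume "i\<in>I"
    then have "Some(i,t)\<in>B" unfolding B_def by auto
    then show "f(Some(i,t)) = Some(i,t)" using fix_unique[OF Bmap Binj Bpairs] by blast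
  qed
  have ifix: "\<And>i s. i\<in>I \<Longrightarrow> s\<le>t \<Longrightarrow> f(Some(i,s)) = Some(i,s)"
  proof -
    fix i s assume "i\<in>I" "s\<le>t"
    then show "f(Some(i,s)) = Some(i,s)" using isofix[of i s] pendfix[of i] by (cases "s<t") auto
  qed
  have nonisoMap: "\<And>v s. v\<in>V \<Longrightarrow> v\<notin>I \<Longrightarrow> s\<le>t \<Longrightarrow> \<exists>v' s'. f(Some(v,s)) = Some(v',s') \<and> v'\<in>V \<and> v'\<notin>I \<and> s'\<le>t"
  proof -
    fix v s assume vs: "v\<in>V" "v\<notin>I" "s\<le>t"
    have xV: "Some(v,s)\<in>VM" using vs by auto
    have "f(Some(v,s)) \<noteq> None"
    proof
      assume "f(Some(v,s)) = None"
      then have "f(Some(v,s)) = f None" using fN by simp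
      then show False using injE[OF xV None_VM] by simp
    qed
    then obtain p where p: "f(Some(v,s)) = Some p" by (auto simp: not_None_eq)
    obtain v' s' where "p = (v',s')" by (cases p)
    then have fx: "f(Some(v,s)) = Some(v',s')" using p by simp
    then have v's': "v'\<in>V" "s'\<le>t" using fin[OF xV] by auto
    obtain y1 y2 where y: "y1\<in>VM" "y2\<in>VM" "y1\<noteq>y2" "{y1,Some(v,s)}\<in>EM" "{y2,Some(v,s)}\<in>EM"
      using nbr2 vs by blast
    have "f y1 \<noteq> f y2" using injE y by blast
    then obtain y where yy: "y\<in>VM" "{y,Some(v,s)}\<in>EM" "f y \<noteq> None" using y by metis
    then obtain q where q: "f y = Some q" by (auto simp: not_None_eq)
    obtain a b where "q = (a,b)" by (cases q)
    then have fy: "f y = Some(a,b)" using q by simp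
    have "{f y, f(Some(v,s))}\<in>EM" using aut_EM[OF aut xV yy(1)] yy by simp
    then have "{a,v'}\<in>E" using fy fx EM_SS by simp
    then have "v'\<notin>I" using isoE by blast
    then show "\<exists>v' s'. f(Some(v,s)) = Some(v',s') \<and> v'\<in>V \<and> v'\<notin>I \<and> s'\<le>t" using fx v's' by blast
  qed
  have lvl: "\<And>m. \<forall>s\<le>t. t - s = m \<longrightarrow> (\<forall>v\<in>V-I. \<exists>v'\<in>V-I. f(Some(v,s)) = Some(v',s))"
  proof -
    fix m show "\<forall>s\<le>t. t - s = m \<longrightarrow> (\<forall>v\<in>V-I. \<exists>v'\<in>V-I. f(Some(v,s)) = Some(v',s))"
    proof (induct m rule: less_induct)
      case (less m)
      show ?case
      proof (intro allI impI ballI)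
        fix s v assume s: "s\<le>t" "t - s = m" and v: "v\<in>V-I"
        obtain v' s' where fx: "f(Some(v,s)) = Some(v',s')" "v'\<in>V" "v'\<notin>I" "s'\<le>t"
          using nonisoMap v s by blast
        have xV: "Some(v,s)\<in>VM" using v s by auto
        show "\<exists>v'\<in>V-I. f(Some(v,s)) = Some(v',s)"
        proof (cases "s = t")
          case True
          have "{None, Some(v,s)}\<in>EM" using True v EM_NS by auto
          then have "{f None, f(Some(v,s))}\<in>EM" using aut_EM[OF aut xV None_VM] by simp
          then have "s' = t" using fN fx EM_NS by simp
          then show ?thesis using fx True by auto
        next
          case False
          then have st: "s<t" using s by simp
          obtain u where u: "{u,v}\<in>E" using nonisoE v by auto
          have uI: "u\<in>V-I" using u E_in isoE' by blast
          have IH1: "\<forall>v\<in>V-I. \<exists>v'\<in>V-I. f(Some(v,Suc s)) = Some(v',Suc s)"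
          proof -
            have "t - Suc s < m" using st s by simp
            then have "\<forall>sa\<le>t. t - sa = t - Suc s \<longrightarrow> (\<forall>v\<in>V-I. \<exists>v'\<in>V-I. f(Some(v,sa)) = Some(v',sa))"
              by (rule less)
            then show ?thesis using st by simp
          qed
          then obtain u' where u': "f(Some(u,Suc s)) = Some(u',Suc s)" using uI by blast
          have uV: "Some(u,Suc s)\<in>VM" using uI st by auto
          have "{Some(u,Suc s), Some(v,s)}\<in>EM" using u st EM_SS by simp
          then have "{f(Some(u,Suc s)), f(Some(v,s))}\<in>EM" using aut_EM[OF aut xV uV] by simp
          then have "s' = s \<or> (s' = Suc (Suc s) \<and> Suc s < t)" using u' fx EM_SS by auto
          moreover have "\<not>(s' = Suc (Suc s) \<and> Suc s < t)"
          proof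
            assume s'2: "s' = Suc (Suc s) \<and> Suc s < t"
            have IH2: "\<forall>v\<in>V-I. \<exists>v'\<in>V-I. f(Some(v,Suc (Suc s))) = Some(v',Suc (Suc s))"
            proof -
              have "t - Suc (Suc s) < m" using st s by simp
              then have "\<forall>sa\<le>t. t - sa = t - Suc (Suc s) \<longrightarrow> (\<forall>v\<in>V-I. \<exists>v'\<in>V-I. f(Some(v,sa)) = Some(v',sa))"
                by (rule less)
              then show ?thesis using s'2 by simp
            qed
            define As where "As = Some ` ((V-I)\<times>{Suc (Suc s)})"
            have AsV: "As \<subseteq> VM" unfolding As_def using s'2 by auto
            have "f ` As \<subseteq> As" unfolding As_def using IH2 by auto
            moreover have "finite As" unfolding As_def using finV by auto
            ultimately have "f ` As = As" using endo_inj_surj inj_on_subset[OF inj AsV] by blast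
            moreover have "Some(v',s')\<in>As" unfolding As_def using fx s'2 by auto
            ultimately obtain y where y: "y\<in>As" "f y = f(Some(v,s))" using fx by (metis imageE)
            then have "y = Some(v,s)" using injE AsV xV by blast
            then show False using y(1) unfolding As_def by auto
          qed
          ultimately show ?thesis using fx by auto
        qed
      qed
    qed
  qed
  define \<sigma> where "\<sigma> s v = fst (the (f (Some(v,s))))" for s v
  have sig: "\<And>s v. s\<le>t \<Longrightarrow> v\<in>V \<Longrightarrow> f(Some(v,s)) = Some(\<sigma> s v, s) \<and> \<sigma> s v \<in> V"
  proof -
    fix s v assume sv: "s\<le>t" "v\<in>V"
    show "f(Some(v,s)) = Some(\<sigma> s v, s) \<and> \<sigma> s v \<in> V"
    proof (cases "v\<in>I")
      case True
      then show ?thesis using ifix sv unfolding \<sigma>_def by auto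
    next
      case False
      then obtain v' where "v'\<in>V-I" "f(Some(v,s)) = Some(v',s)" using lvl sv by blast
      then show ?thesis unfolding \<sigma>_def by auto
    qed
  qed
  have siginj: "\<And>s u v. s\<le>t \<Longrightarrow> u\<in>V \<Longrightarrow> v\<in>V \<Longrightarrow> \<sigma> s u = \<sigma> s v \<Longrightarrow> u = v"
  proof -
    fix s u v assume a: "s\<le>t" "u\<in>V" "v\<in>V" "\<sigma> s u = \<sigma> s v"
    then have "f(Some(u,s)) = f(Some(v,s))" using sig by metis
    moreover have "Some(u,s)\<in>VM" "Some(v,s)\<in>VM" using a by auto
    ultimately show "u = v" using injE by blast
  qed
  have sig0aut: "graph_aut V E (\<sigma> 0)"
    unfolding graph_aut_def
  proof
    have "inj_on (\<sigma> 0) V" using siginj unfolding inj_on_def by blast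
    moreover have "\<sigma> 0 ` V \<subseteq> V" using sig by blast
    ultimately show "bij_betw (\<sigma> 0) V V" unfolding bij_betw_def using endo_inj_surj finV by blast
    show "\<forall>u\<in>V. \<forall>v\<in>V. ({u, v} \<in> E) = ({\<sigma> 0 u, \<sigma> 0 v} \<in> E)"
    proof (intro ballI)
      fix u v assume uv: "u\<in>V" "v\<in>V"
      have "{u,v}\<in>E \<longleftrightarrow> {Some(u,0),Some(v,0)}\<in>EM" using EM_SS by simp
      also have "\<dots> \<longleftrightarrow> {f(Some(u,0)),f(Some(v,0))}\<in>EM" using aut_EM[OF aut] uv by simp
      also have "\<dots> \<longleftrightarrow> {\<sigma> 0 u, \<sigma> 0 v}\<in>E" using sig[of 0 u] sig[of 0 v] uv EM_SS by simp
      finally show "({u, v} \<in> E) = ({\<sigma> 0 u, \<sigma> 0 v} \<in> E)" .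
    qed
  qed
  have sig0D: "\<forall>v\<in>D. \<sigma> 0 v = v"
  proof
    fix v assume v: "v\<in>D"
    then have "v\<in>V" using D unfolding determining_set_def by auto
    then have "f(Some(v,0)) = Some(\<sigma> 0 v, 0)" using sig by simp
    then show "\<sigma> 0 v = v" using fixD v by simp
  qed
  have sig0: "\<forall>v\<in>V. \<sigma> 0 v = v"
    using D sig0aut sig0D unfolding determining_set_def by blast
  have sigid: "\<And>s. s\<le>t \<Longrightarrow> \<forall>v\<in>V. \<sigma> s v = v"
  proof -
    fix s show "s\<le>t \<Longrightarrow> \<forall>v\<in>V. \<sigma> s v = v"
    proof (induct s)
      case 0
      then show ?case using sig0 by simp
    next
      case (Suc s)
      then have IH: "\<forall>v\<in>V. \<sigma> s v = v" by simp
      show ?case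
      proof
        fix v assume v: "v\<in>V"
        define w where "w = \<sigma> (Suc s) v"
        have w: "w\<in>V" "f(Some(v,Suc s)) = Some(w,Suc s)" using sig[OF Suc(2) v] unfolding w_def by auto
        have "\<forall>a\<in>V. {a,v}\<in>E \<longleftrightarrow> {a,w}\<in>E"
        proof
          fix a assume a: "a\<in>V"
          have st: "s < t" "s \<le> t" using Suc(2) by auto
          have fa: "f(Some(a,s)) = Some(a,s)" using sig[OF st(2) a] IH a by simp
          have aV: "Some(a,s)\<in>VM" "Some(v,Suc s)\<in>VM" using a v st by auto
          have "{a,v}\<in>E \<longleftrightarrow> {Some(a,s),Some(v,Suc s)}\<in>EM" using EM_SS st by simp
          also have "\<dots> \<longleftrightarrow> {f(Some(a,s)),f(Some(v,Suc s))}\<in>EM" using aut_EM[OF aut aV(2) aV(1)] by simp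
          also have "\<dots> \<longleftrightarrow> {a,w}\<in>E" unfolding fa w(2) using EM_SS st by simp
          finally show "{a,v}\<in>E \<longleftrightarrow> {a,w}\<in>E" .
        qed
        then have tw: "twins V E v w" unfolding twins_iff using v w(1) by simp
        have wd: "\<sigma> (Suc s) v = w" by (simp only: w_def)
        show "\<sigma> (Suc s) v = v"
        proof (rule ccontr)
          assume ne: "\<sigma> (Suc s) v \<noteq> v"
          then have nw: "v \<noteq> w" using wd by simp
          have "\<forall>u v. u \<noteq> v \<and> twins V E u v \<longrightarrow> u\<in>T \<or> v\<in>T" using T_cover unfolding twin_cover_def by simp
          then have "v\<in>T \<or> w\<in>T" using nw tw by simp
          moreover have "v\<notin>T"
          proof
            assume "v\<in>T"
            then have "f(Some(v,Suc s)) = Some(v,Suc s)" using fixT[rule_format, of v "Suc s"] Suc(2) by simp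
            then show False using w(2) nw by simp
          qed
          ultimately have "w\<in>T" by simp
          then have fw: "f(Some(w,Suc s)) = Some(w,Suc s)" using fixT[rule_format, of w "Suc s"] Suc(2) by simp
          have "f(Some(w,Suc s)) = Some(\<sigma> (Suc s) w, Suc s)" using sig[OF Suc(2) w(1)] by simp
          then have "\<sigma> (Suc s) w = \<sigma> (Suc s) v" using fw wd by simp
          then have "w = v" using siginj[OF Suc(2) w(1) v] by blast
          then show False using nw by simp
        qed
      qed
    qed
  qed
  show ?thesis
  proof
    fix x assume x: "x\<in>VM"
    show "f x = x"
    proof (cases x)
      case None
      then show ?thesis using fN by simp
    next
      case (Some p)
      then obtain v s where vs: "x = Some(v,s)" by (cases p) auto
      then have "v\<in>V" "s\<le>t" using x by auto
      then show ?thesis using vs sig[of s v] sigid[of s] by simp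
    qed
  qed
qed

end


context myc2 begin

definition L where "L S s = {v\<in>V-I. Some(v,s)\<in>S}"
definition NS where "NS = {v\<in>V. \<exists>u. u\<noteq>v \<and> twins V E u v}"

lemma twins_I: "twins V E u v \<Longrightarrow> u\<in>I \<Longrightarrow> v\<in>I"
  unfolding twins_iff I_def by blast

lemma twins_sym: "twins V E u v \<Longrightarrow> twins V E v u"
  unfolding twins_def by auto

lemma Lcover0: "True" by simp

lemma Lcover:
  assumes S: "determining_set VM EM S" and c: "c\<in>I" and s: "s\<le>t"
  shows "twin_cover V E ((L S s \<inter> NS) \<union> (I - {c}))"
  unfolding twin_cover_def
proof (intro conjI allI impI)
  show "L S s \<inter> NS \<union> (I - {c}) \<subseteq> V" unfolding L_def using I_sub by auto
  fix u v assume uv: "u \<noteq> v \<and> twins V E u v"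
  then have tw: "twins V E u v" and ne: "u\<noteq>v" by auto
  have uV: "u\<in>V" "v\<in>V" using tw unfolding twins_def by auto
  show "u \<in> L S s \<inter> NS \<union> (I - {c}) \<or> v \<in> L S s \<inter> NS \<union> (I - {c})"
  proof (cases "u\<in>I")
    case True
    then have "v\<in>I" using twins_I[OF tw] by blast
    then show ?thesis using True ne by auto
  next
    case False
    then have vI: "v\<notin>I" using twins_I[OF twins_sym[OF tw]] by blast
    have "v\<noteq>u" using ne by simp
    then have nsu: "u\<in>NS" unfolding NS_def using uV(1) twins_sym[OF tw] by (intro CollectI conjI exI[of _ v]) auto
    have nsv: "v\<in>NS" unfolding NS_def using uV ne tw by (intro CollectI conjI exI[of _ u]) auto
    have nb: "\<forall>a\<in>V. {a,u}\<in>E \<longleftrightarrow> {a,v}\<in>E" using tw unfolding twins_iff by blast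
    have "Some(u,s)\<in>S \<or> Some(v,s)\<in>S"
    proof (rule det_cover[OF S])
      show "Some(u,s)\<in>VM" "Some(v,s)\<in>VM" using uV s by auto
      show "Some(u,s) \<noteq> Some(v,s)" using ne by simp
      show "\<forall>z\<in>VM - {Some(u,s), Some(v,s)}. ({z, Some(u,s)} \<in> EM) = ({z, Some(v,s)} \<in> EM)"
      proof
        fix z assume "z \<in> VM - {Some(u,s), Some(v,s)}"
        then have "z\<in>VM" by simp
        from lvl_twin[OF uV nb this] show "({z, Some(u,s)} \<in> EM) = ({z, Some(v,s)} \<in> EM)" .
      qed
      show "\<forall>z. {z} \<notin> EM" using EM_noloop by blast
    qed
    then show ?thesis
    proof
      assume "Some(u,s)\<in>S"
      then have "u\<in>L S s" unfolding L_def using uV False by simp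
      then show ?thesis using nsu by simp
    next
      assume "Some(v,s)\<in>S"
      then have "v\<in>L S s" unfolding L_def using uV vI by simp
      then show ?thesis using nsv by simp
    qed
  qed
qed

lemma det_X:
  assumes S: "determining_set VM EM S" and c: "c\<in>I"
  shows "determining_set V E ((L S 0 \<union> (\<Union>s\<in>{1..t}. L S s - NS)) \<union> (I - {c}))"
proof -
  define X where "X = L S 0 \<union> (\<Union>s\<in>{1..t}. L S s - NS)"
  have XV: "X \<union> (I - {c}) \<subseteq> V" unfolding X_def L_def using I_sub by auto
  have main: "\<forall>x\<in>V. g x = x" if g: "graph_aut V E g" and gfix: "\<forall>x\<in>X \<union> (I - {c}). g x = x" for g
  proof (rule ccontr)
    assume "\<not> (\<forall>x\<in>V. g x = x)"
    then obtain v0 where v0: "v0\<in>V" "g v0 \<noteq> v0" by auto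
    have ginj: "\<And>x y. x\<in>V \<Longrightarrow> y\<in>V \<Longrightarrow> g x = g y \<Longrightarrow> x = y" using aut_inj[OF g] unfolding inj_on_def by blast
    have gV: "\<And>x. x\<in>V \<Longrightarrow> g x \<in> V" using aut_in[OF g] .
    have gsurj: "\<And>y. y\<in>V \<Longrightarrow> \<exists>x\<in>V. g x = y" using aut_surj[OF g] .
    have ge: "\<And>x y. x\<in>V \<Longrightarrow> y\<in>V \<Longrightarrow> {g x, g y}\<in>E \<longleftrightarrow> {x,y}\<in>E" using aut_edge[OF g] .
    have comm: "\<And>a b. {a,b} = {b,a}" by auto
    have gtw: "twins V E (g u) (g v) \<longleftrightarrow> twins V E u v" if uv: "u\<in>V" "v\<in>V" for u v
    proof -
      have "(\<forall>a\<in>V. {a,g u}\<in>E \<longleftrightarrow> {a,g v}\<in>E) \<longleftrightarrow> (\<forall>a\<in>V. {a,u}\<in>E \<longleftrightarrow> {a,v}\<in>E)"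
      proof
        assume h: "\<forall>a\<in>V. {a,g u}\<in>E \<longleftrightarrow> {a,g v}\<in>E"
        show "\<forall>a\<in>V. {a,u}\<in>E \<longleftrightarrow> {a,v}\<in>E"
        proof
          fix a assume a: "a\<in>V"
          have "{a,u}\<in>E \<longleftrightarrow> {g a, g u}\<in>E" using ge[OF a uv(1)] by simp
          also have "\<dots> \<longleftrightarrow> {g a, g v}\<in>E" using h gV[OF a] by blast
          also have "\<dots> \<longleftrightarrow> {a,v}\<in>E" using ge[OF a uv(2)] by simp
          finally show "{a,u}\<in>E \<longleftrightarrow> {a,v}\<in>E" .
        qed
      next
        assume h: "\<forall>a\<in>V. {a,u}\<in>E \<longleftrightarrow> {a,v}\<in>E"
        show "\<forall>a\<in>V. {a,g u}\<in>E \<longleftrightarrow> {a,g v}\<in>E"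
        proof
          fix a assume a: "a\<in>V"
          obtain a' where a': "a'\<in>V" "g a' = a" using gsurj[OF a] by blast
          have "{a,g u}\<in>E \<longleftrightarrow> {a',u}\<in>E" using ge[OF a'(1) uv(1)] a' by simp
          also have "\<dots> \<longleftrightarrow> {a',v}\<in>E" using h a'(1) by blast
          also have "\<dots> \<longleftrightarrow> {a, g v}\<in>E" using ge[OF a'(1) uv(2)] a' by simp
          finally show "{a,g u}\<in>E \<longleftrightarrow> {a,g v}\<in>E" .
        qed
      qed
      then show ?thesis unfolding twins_iff using uv gV by simp
    qed
    have gI: "\<forall>i\<in>I. g i \<in> I"
    proof
      fix i assume i: "i\<in>I"
      then have iV: "i\<in>V" using I_sub by auto
      have "\<forall>u\<in>V. {u, g i}\<notin>E"
      proof
        fix u assume u: "u\<in>V"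
        obtain u' where u': "u'\<in>V" "g u' = u" using gsurj[OF u] by blast
        have "{u,g i}\<in>E \<longleftrightarrow> {u',i}\<in>E" using ge[OF u'(1) iV] u' by simp
        then show "{u, g i}\<notin>E" using isoE[OF i] by simp
      qed
      then show "g i \<in> I" unfolding I_def using gV[OF iV] by simp
    qed
    have ginjI: "inj_on g I" using aut_inj[OF g] I_sub inj_on_subset by blast
    have Ipairs: "\<forall>x\<in>I. \<forall>y\<in>I. x\<noteq>y \<longrightarrow> g x = x \<or> g y = y" using gfix by blast
    have gIfix: "\<And>i. i\<in>I \<Longrightarrow> g i = i" using fix_unique[OF gI ginjI Ipairs] by blast
    have cov: "twin_cover V E ((L S 0 \<inter> NS) \<union> (I - {c}))" using Lcover[OF S c] by simp
    have covfix: "\<And>x. x \<in> (L S 0 \<inter> NS) \<union> (I - {c}) \<Longrightarrow> g x = x" using gfix unfolding X_def by blast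
    have g4: "\<forall>a\<in>V. {a, g v}\<in>E \<longleftrightarrow> {a,v}\<in>E" if v: "v\<in>NS" for v
    proof -
      obtain u where u: "u\<noteq>v" "twins V E u v" using v unfolding NS_def by blast
      have uV: "u\<in>V" "v\<in>V" using u(2) unfolding twins_def by auto
      have "u \<in> (L S 0 \<inter> NS) \<union> (I - {c}) \<or> v \<in> (L S 0 \<inter> NS) \<union> (I - {c})"
        using cov u unfolding twin_cover_def by blast
      then show ?thesis
      proof
        assume "v \<in> (L S 0 \<inter> NS) \<union> (I - {c})"
        then have "g v = v" using covfix by blast
        then show ?thesis by simp
      next
        assume "u \<in> (L S 0 \<inter> NS) \<union> (I - {c})"
        then have gu: "g u = u" using covfix by blast
        have "twins V E (g u) (g v)" using gtw[OF uV] u(2) by simp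
        then have "twins V E u (g v)" using gu by simp
        then have "\<forall>a\<in>V. {a,u}\<in>E \<longleftrightarrow> {a,g v}\<in>E" unfolding twins_iff by blast
        moreover have "\<forall>a\<in>V. {a,u}\<in>E \<longleftrightarrow> {a,v}\<in>E" using u(2) unfolding twins_iff by blast
        ultimately show ?thesis by blast
      qed
    qed
    have gNS: "g v \<in> NS \<longleftrightarrow> v \<in> NS" if v: "v\<in>V" for v
    proof
      assume "v\<in>NS"
      then obtain u where u: "u\<noteq>v" "twins V E u v" unfolding NS_def by blast
      have uV: "u\<in>V" using u(2) unfolding twins_def by auto
      have "g u \<noteq> g v" using ginj[OF uV v] u(1) by blast
      moreover have "twins V E (g u) (g v)" using gtw[OF uV v] u(2) by simp
      ultimately show "g v \<in> NS" unfolding NS_def using gV[OF v] by blast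
    next
      assume "g v\<in>NS"
      then obtain u where u: "u\<noteq>g v" "twins V E u (g v)" unfolding NS_def by blast
      have uV: "u\<in>V" using u(2) unfolding twins_def by auto
      obtain u' where u': "u'\<in>V" "g u' = u" using gsurj[OF uV] by blast
      have "u' \<noteq> v" using u u' by blast
      moreover have "twins V E u' v" using gtw[OF u'(1) v] u' u(2) by simp
      ultimately show "v\<in>NS" unfolding NS_def using v by blast
    qed
    define h where "h v = (if v\<in>NS then v else g v)" for v
    define G2 where "G2 (s::nat) v = (if s = 0 then g v else h v)" for s v
    have G2V: "\<And>s v. v\<in>V \<Longrightarrow> G2 s v \<in> V" unfolding G2_def h_def using gV by auto
    have G2inj: "\<And>s u v. u\<in>V \<Longrightarrow> v\<in>V \<Longrightarrow> G2 s u = G2 s v \<Longrightarrow> u = v"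
    proof -
      fix s u v assume a: "u\<in>V" "v\<in>V" "G2 s u = G2 s v"
      show "u = v"
      proof (cases "s = 0")
        case True
        then show ?thesis using a ginj unfolding G2_def by auto
      next
        case False
        then have hh: "h u = h v" using a unfolding G2_def by simp
        show ?thesis
        proof (cases "u\<in>NS")
          case True
          show ?thesis
          proof (cases "v\<in>NS")
            case True
            then show ?thesis using hh \<open>u\<in>NS\<close> unfolding h_def by simp
          next
            case False
            then have "u = g v" using hh \<open>u\<in>NS\<close> unfolding h_def by simp
            then show ?thesis using gNS[OF a(2)] False \<open>u\<in>NS\<close> by simp
          qed
        next
          case False
          show ?thesis
          proof (cases "v\<in>NS")
            case True
            then have "v = g u" using hh \<open>u\<notin>NS\<close> unfolding h_def by simp
            then show ?thesis using gNS[OF a(1)] True \<open>u\<notin>NS\<close> by simp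
          next
            case False
            then have "g u = g v" using hh \<open>u\<notin>NS\<close> unfolding h_def by simp
            then show ?thesis using ginj a by blast
          qed
        qed
      qed
    qed
    have G2nb: "\<And>s v a. v\<in>V \<Longrightarrow> a\<in>V \<Longrightarrow> {a, G2 s v}\<in>E \<longleftrightarrow> {a, g v}\<in>E"
    proof -
      fix s v a assume a: "v\<in>V" "a\<in>V"
      show "{a, G2 s v}\<in>E \<longleftrightarrow> {a, g v}\<in>E"
      proof (cases "s = 0 \<or> v \<notin> NS")
        case True
        then show ?thesis unfolding G2_def h_def by auto
      next
        case False
        then have "G2 s v = v" "v\<in>NS" unfolding G2_def h_def by auto
        then show ?thesis using g4[of v] a by simp
      qed
    qed
    have G2edge: "\<And>r s u v. u\<in>V \<Longrightarrow> v\<in>V \<Longrightarrow> {G2 r u, G2 s v}\<in>E \<longleftrightarrow> {u,v}\<in>E"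
    proof -
      fix r s u v assume uv: "u\<in>V" "v\<in>V"
      have "{G2 r u, G2 s v}\<in>E \<longleftrightarrow> {G2 r u, g v}\<in>E" using G2nb[OF uv(2) G2V[OF uv(1)]] .
      also have "\<dots> \<longleftrightarrow> {g v, G2 r u}\<in>E" by (simp add: comm)
      also have "\<dots> \<longleftrightarrow> {g v, g u}\<in>E" using G2nb[OF uv(1) gV[OF uv(2)]] .
      also have "\<dots> \<longleftrightarrow> {g u, g v}\<in>E" by (simp add: comm)
      also have "\<dots> \<longleftrightarrow> {u,v}\<in>E" using ge[OF uv] .
      finally show "{G2 r u, G2 s v}\<in>E \<longleftrightarrow> {u,v}\<in>E" .
    qed
    define \<phi> where "\<phi> = map_option (\<lambda>(v::'a,s::nat). (G2 s v, s))"
    have \<phi>S: "\<And>v s. \<phi> (Some(v,s)) = Some(G2 s v, s)" unfolding \<phi>_def by simp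
    have \<phi>N: "\<phi> None = None" unfolding \<phi>_def by simp
    have \<phi>VM: "\<phi> ` VM \<subseteq> VM"
    proof
      fix y assume "y \<in> \<phi> ` VM"
      then obtain x where x: "x\<in>VM" "y = \<phi> x" by blast
      show "y\<in>VM"
      proof (cases x)
        case None then show ?thesis using x \<phi>N by simp
      next
        case (Some p)
        then obtain v s where "x = Some(v,s)" by (cases p) auto
        then show ?thesis using x \<phi>S G2V by simp
      qed
    qed
    have \<phi>inj: "inj_on \<phi> VM"
    proof (rule inj_onI)
      fix x y assume xy: "x\<in>VM" "y\<in>VM" "\<phi> x = \<phi> y"
      show "x = y"
      proof (cases x)
        case None
        then show ?thesis using xy \<phi>N unfolding \<phi>_def by (cases y) auto
      next
        case (Some p)
        then obtain v s where xv: "x = Some(v,s)" by (cases p) auto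
        show ?thesis
        proof (cases y)
          case None
          then show ?thesis using xy xv \<phi>N \<phi>S by simp
        next
          case (Some q)
          then obtain u r where yu: "y = Some(u,r)" by (cases q) auto
          then have "G2 s v = G2 r u" "s = r" using xy xv \<phi>S by auto
          then show ?thesis using G2inj xv yu xy by auto
        qed
      qed
    qed
    have \<phi>aut: "graph_aut VM EM \<phi>"
      unfolding graph_aut_def
    proof
      show "bij_betw \<phi> VM VM" unfolding bij_betw_def using \<phi>inj endo_inj_surj[OF finVM \<phi>VM \<phi>inj] by simp
      show "\<forall>x\<in>VM. \<forall>y\<in>VM. ({x, y} \<in> EM) = ({\<phi> x, \<phi> y} \<in> EM)"
      proof (intro ballI)
        fix x y assume xy: "x\<in>VM" "y\<in>VM"
        show "({x, y} \<in> EM) = ({\<phi> x, \<phi> y} \<in> EM)"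
        proof (cases x)
          case None
          show ?thesis
          proof (cases y)
            case None2: None
            then show ?thesis using None \<phi>N by simp
          next
            case (Some q)
            then obtain u r where yu: "y = Some(u,r)" by (cases q) auto
            then have "u\<in>V" using xy by simp
            then show ?thesis using None yu \<phi>N \<phi>S EM_NS G2V by simp
          qed
        next
          case (Some p)
          then obtain v s where xv: "x = Some(v,s)" by (cases p) auto
          then have vV: "v\<in>V" using xy by simp
          show ?thesis
          proof (cases y)
            case None
            then show ?thesis using xv vV \<phi>N \<phi>S EM_SN G2V by simp
          next
            case (Some q)
            then obtain u r where yu: "y = Some(u,r)" by (cases q) auto
            then have "u\<in>V" using xy by simp
            then show ?thesis using xv yu vV \<phi>S EM_SS G2edge by simp
          qed
        qed
      qed
    qed
    have \<phi>fix: "\<forall>x\<in>S. \<phi> x = x"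
    proof
      fix x assume xS: "x\<in>S"
      then have xV: "x\<in>VM" using S unfolding determining_set_def by auto
      show "\<phi> x = x"
      proof (cases x)
        case None then show ?thesis using \<phi>N by simp
      next
        case (Some p)
        then obtain v s where xv: "x = Some(v,s)" by (cases p) auto
        then have vs: "v\<in>V" "s\<le>t" using xV by auto
        have "G2 s v = v"
        proof (cases "v\<in>I")
          case True
          then show ?thesis using gIfix[OF True] unfolding G2_def h_def by simp
        next
          case False
          then have vL: "v \<in> L S s" unfolding L_def using vs xS xv by simp
          show ?thesis
          proof (cases "s = 0")
            case True
            then have "v\<in>X" unfolding X_def using vL by simp
            then show ?thesis using gfix True unfolding G2_def by simp
          next
            case False
            show ?thesis
            proof (cases "v\<in>NS")
              case True
              then show ?thesis using False unfolding G2_def h_def by simp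
            next
              case nNS: False
              have "s\<in>{1..t}" using False vs by auto
              then have "v\<in>X" unfolding X_def using vL nNS by blast
              then show ?thesis using gfix False nNS unfolding G2_def h_def by simp
            qed
          qed
        qed
        then show ?thesis using xv \<phi>S by simp
      qed
    qed
    have "\<forall>x\<in>VM. \<phi> x = x" using S \<phi>aut \<phi>fix unfolding determining_set_def by blast
    then have "\<phi> (Some(v0,0)) = Some(v0,0)" using v0 by simp
    then show False using v0 \<phi>S unfolding G2_def by simp
  qed
  show ?thesis unfolding determining_set_def using XV main unfolding X_def by blast
qed

lemma card_split: "finite A \<Longrightarrow> card A = card (A\<inter>B) + card (A-B)"
  using card_Un_disjoint[of "A\<inter>B" "A-B"] by (metis Diff_disjoint Int_Diff Int_Diff_Un finite_Diff finite_Int inf_commute inf_left_idem)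

lemma finL: "finite (L S s)" unfolding L_def using finV by auto

lemma lower:
  assumes S: "determining_set VM EM S"
  shows "det_num V E + t * card T + t - 1 \<le> card S"
proof -
  obtain c where c: "c\<in>I" using Ine by auto
  define k where "k = card I"
  have k1: "k \<ge> 1" unfolding k_def using finI Ine by (simp add: Suc_leI card_gt_0_iff)
  have ck: "card (I - {c}) = k - 1" unfolding k_def using c finI by simp
  have SV: "S \<subseteq> VM" using S unfolding determining_set_def by auto
  have finS: "finite S" using SV finVM finite_subset by blast
  define Iso where "Iso = Some ` (I \<times> {..<t})"
  define Pend where "Pend = Some ` (I \<times> {t})"
  define Q where "Q = (\<lambda>(s,v). Some(v,s)) ` (SIGMA s:{..t}. L S s)"
  have cIso: "card Iso = k * t" unfolding Iso_def k_def
    by (simp add: card_image card_cartesian_product)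
  have cPend: "card Pend = k" unfolding Pend_def k_def
    by (simp add: card_image card_cartesian_product)
  have injQ: "inj_on (\<lambda>(s,v). Some(v::'a,s::nat)) (SIGMA s:{..t}. L S s)"
    by (rule inj_onI) auto
  have cQ: "card Q = (\<Sum>s\<le>t. card (L S s))"
  proof -
    have "card (Sigma {..t} (L S)) = (\<Sum>s\<le>t. card (L S s))" by (rule card_SigmaI) (auto simp: finL)
    then show ?thesis using card_image[OF injQ] by (simp add: Q_def)
  qed
  have finIso: "finite Iso" unfolding Iso_def using finI by simp
  have finPend: "finite Pend" unfolding Pend_def using finI by simp
  have F1: "card Iso \<le> card (Iso\<inter>S) + 1"
  proof (rule cover_card[OF finIso])
    show "\<forall>x\<in>Iso. \<forall>y\<in>Iso. x \<noteq> y \<longrightarrow> x \<in> S \<or> y \<in> S"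
    proof (intro ballI impI)
      fix x y assume xy: "x\<in>Iso" "y\<in>Iso" "x\<noteq>y"
      obtain i r where x: "x = Some(i,r)" "i\<in>I" "r<t" using xy(1) unfolding Iso_def by auto
      obtain j q where y: "y = Some(j,q)" "j\<in>I" "q<t" using xy(2) unfolding Iso_def by auto
      show "x \<in> S \<or> y \<in> S"
      proof (rule det_cover[OF S])
        show "x\<in>VM" "y\<in>VM" using x y I_sub by auto
        show "x\<noteq>y" by fact
        show "\<forall>z\<in>VM - {x,y}. ({z, x} \<in> EM) = ({z, y} \<in> EM)"
          using iso_mu[OF x(2) x(3)] iso_mu[OF y(2) y(3)] x(1) y(1) by blast
        show "\<forall>z. {z} \<notin> EM" using EM_noloop by blast
      qed
    qed
  qed
  have F2: "card Pend \<le> card (Pend\<inter>S) + 1"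
  proof (rule cover_card[OF finPend])
    show "\<forall>x\<in>Pend. \<forall>y\<in>Pend. x \<noteq> y \<longrightarrow> x \<in> S \<or> y \<in> S"
    proof (intro ballI impI)
      fix x y assume xy: "x\<in>Pend" "y\<in>Pend" "x\<noteq>y"
      obtain i where x: "x = Some(i,t)" "i\<in>I" using xy(1) unfolding Pend_def by auto
      obtain j where y: "y = Some(j,t)" "j\<in>I" using xy(2) unfolding Pend_def by auto
      show "x \<in> S \<or> y \<in> S"
      proof (rule det_cover[OF S])
        show "x\<in>VM" "y\<in>VM" using x y I_sub by auto
        show "x\<noteq>y" by fact
        show "\<forall>z\<in>VM - {x,y}. ({z, x} \<in> EM) = ({z, y} \<in> EM)"
          using pend_mu[OF x(2)] pend_mu[OF y(2)] x(1) y(1) by blast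
        show "\<forall>z. {z} \<notin> EM" using EM_noloop by blast
      qed
    qed
  qed
  have QS: "Q \<subseteq> S" unfolding Q_def L_def by auto
  have d1: "(Iso\<inter>S) \<inter> (Pend\<inter>S) = {}" unfolding Iso_def Pend_def by auto
  have d2: "((Iso\<inter>S) \<union> (Pend\<inter>S)) \<inter> Q = {}" unfolding Iso_def Pend_def Q_def L_def by auto
  have "card ((Iso\<inter>S) \<union> (Pend\<inter>S) \<union> Q) = card (Iso\<inter>S) + card (Pend\<inter>S) + card Q"
  proof -
    have fQ: "finite Q" using finS QS finite_subset by blast
    have "card ((Iso\<inter>S) \<union> (Pend\<inter>S) \<union> Q) = card ((Iso\<inter>S) \<union> (Pend\<inter>S)) + card Q"
      by (rule card_Un_disjoint) (use d2 fQ finS in auto)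
    moreover have "card ((Iso\<inter>S) \<union> (Pend\<inter>S)) = card (Iso\<inter>S) + card (Pend\<inter>S)"
      by (rule card_Un_disjoint) (use d1 finS in auto)
    ultimately show ?thesis by simp
  qed
  moreover have "card ((Iso\<inter>S) \<union> (Pend\<inter>S) \<union> Q) \<le> card S"
    by (rule card_mono[OF finS]) (use QS in auto)
  ultimately have cS: "card (Iso\<inter>S) + card (Pend\<inter>S) + card Q \<le> card S" by simp
  have F3: "card T \<le> card (L S s \<inter> NS) + (k - 1)" if s: "s\<le>t" for s
  proof -
    have "card T \<le> card ((L S s \<inter> NS) \<union> (I - {c}))"
      using minT Lcover[OF S c s] unfolding min_twin_cover_def by blast
    also have "\<dots> \<le> card (L S s \<inter> NS) + card (I - {c})" by (rule card_Un_le)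
    finally show ?thesis using ck by simp
  qed
  have F4: "det_num V E \<le> card (L S 0) + (\<Sum>s\<in>{1..t}. card (L S s - NS)) + (k - 1)"
  proof -
    have "det_num V E \<le> card ((L S 0 \<union> (\<Union>s\<in>{1..t}. L S s - NS)) \<union> (I - {c}))"
      by (rule det_le[OF finV det_X[OF S c]])
    also have "\<dots> \<le> card (L S 0 \<union> (\<Union>s\<in>{1..t}. L S s - NS)) + card (I - {c})" by (rule card_Un_le)
    also have "\<dots> \<le> card (L S 0) + card (\<Union>s\<in>{1..t}. L S s - NS) + card (I - {c})"
      using card_Un_le by simp
    also have "\<dots> \<le> card (L S 0) + (\<Sum>s\<in>{1..t}. card (L S s - NS)) + card (I - {c})"
      using card_UN_le[of "{1..t}" "\<lambda>s. L S s - NS"] by simp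
    finally show ?thesis using ck by simp
  qed
  have sumsplit: "(\<Sum>s\<le>t. card (L S s)) = card (L S 0) + (\<Sum>s\<in>{1..t}. card (L S s \<inter> NS)) + (\<Sum>s\<in>{1..t}. card (L S s - NS))"
  proof -
    have "(\<Sum>s\<le>t. card (L S s)) = card (L S 0) + (\<Sum>s\<in>{Suc 0..t}. card (L S s))"
      by (simp add: atMost_atLeast0 sum.atLeast_Suc_atMost)
    also have "(\<Sum>s\<in>{Suc 0..t}. card (L S s)) = (\<Sum>s\<in>{1..t}. card (L S s \<inter> NS) + card (L S s - NS))"
      by (rule sum.cong) (auto intro: card_split[OF finL])
    finally show ?thesis by (simp add: sum.distrib)
  qed
  have F3s: "t * card T \<le> (\<Sum>s\<in>{1..t}. card (L S s \<inter> NS)) + t * (k - 1)"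
  proof -
    have "(\<Sum>s\<in>{1..t}. card T) \<le> (\<Sum>s\<in>{1..t}. card (L S s \<inter> NS) + (k - 1))"
      by (rule sum_mono) (use F3 in auto)
    then show ?thesis by (simp add: sum.distrib)
  qed
  have kt: "t * (k - 1) = t * k - t" by (simp add: diff_mult_distrib2)
  have tk: "t * k \<ge> t" using k1 by simp
  define a where "a = (\<Sum>s\<in>{1..t}. card (L S s \<inter> NS))"
  define b where "b = (\<Sum>s\<in>{1..t}. card (L S s - NS))"
  define tk where "tk = t * k"
  have e1: "t * card T + t \<le> a + tk" using F3s kt tk unfolding a_def tk_def by linarith
  have e2: "det_num V E + 1 \<le> card (L S 0) + b + k" using F4 k1 unfolding b_def by linarith
  have e3: "card (Iso\<inter>S) + card (Pend\<inter>S) + card (L S 0) + a + b \<le> card S"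
    using cS cQ sumsplit unfolding a_def b_def by linarith
  have e4: "tk \<le> card (Iso\<inter>S) + 1" using F1 cIso unfolding tk_def by (simp add: mult.commute)
  have e5: "k \<le> card (Pend\<inter>S) + 1" using F2 cPend by simp
  show ?thesis using e1 e2 e3 e4 e5 by linarith
qed

end


context myc2 begin

lemma upper: "det_num VM EM \<le> t * card T + det_num V E + t - 1"
proof -
  obtain D where D: "determining_set V E D" "card D = det_num V E" using det_ex[OF finV] by blast
  obtain c where c: "c\<in>I" "c\<notin>T" "\<forall>i\<in>I. i\<notin>T \<longrightarrow> i = c" using c_ex by blast
  have DV: "D \<subseteq> V" using D unfolding determining_set_def by auto
  have finD: "finite D" using DV finV finite_subset by blast
  define S1 where "S1 = Some ` (D\<times>{0::nat})"
  define S2 where "S2 = Some ` (T\<times>{1..t})"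
  define S3 where "S3 = Some ` ({c}\<times>{1..<t})"
  have c1: "card S1 = card D" unfolding S1_def by (simp add: card_image card_cartesian_product)
  have c2: "card S2 = card T * t" unfolding S2_def by (simp add: card_image card_cartesian_product)
  have c3: "card S3 = t - 1" unfolding S3_def by (simp add: card_image card_cartesian_product)
  have f1: "finite S1" "finite S2" "finite S3" unfolding S1_def S2_def S3_def using finD finT by auto
  have "card (S1 \<union> S2 \<union> S3) = card (S1 \<union> S2) + card S3"
    by (rule card_Un_disjoint) (use f1 c(2) in \<open>auto simp: S1_def S2_def S3_def\<close>)
  moreover have "card (S1 \<union> S2) = card S1 + card S2"
    by (rule card_Un_disjoint) (use f1 in \<open>auto simp: S1_def S2_def\<close>)
  ultimately have cS: "card (S1 \<union> S2 \<union> S3) = t * card T + det_num V E + t - 1"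
    using c1 c2 c3 D(2) t1 by (simp add: mult.commute)
  have cV: "c\<in>V" using c(1) I_sub by auto
  have det: "determining_set VM EM (S1 \<union> S2 \<union> S3)"
    unfolding determining_set_def
  proof (intro conjI allI impI)
    show "S1 \<union> S2 \<union> S3 \<subseteq> VM" unfolding S1_def S2_def S3_def using DV T_sub cV by auto
    fix f assume fa: "graph_aut VM EM f \<and> (\<forall>x\<in>S1 \<union> S2 \<union> S3. f x = x)"
    show "\<forall>x\<in>VM. f x = x"
    proof (rule upper_fix[OF _ D(1) c])
      show "graph_aut VM EM f" using fa by simp
      show "\<forall>v\<in>D. f (Some (v, 0)) = Some (v, 0)" using fa unfolding S1_def by auto
      show "\<forall>v\<in>T. \<forall>s. 1 \<le> s \<and> s \<le> t \<longrightarrow> f (Some (v, s)) = Some (v, s)" using fa unfolding S2_def by auto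
      show "\<forall>s. 1 \<le> s \<and> s < t \<longrightarrow> f (Some (c, s)) = Some (c, s)" using fa unfolding S3_def by auto
    qed
  qed
  show ?thesis using det_le[OF finVM det] cS by simp
qed

lemma caseii: "det_num VM EM = t * card T + det_num V E + t - 1"
proof -
  have "det_num V E + t * card T + t - 1 \<le> det_num VM EM"
    by (rule det_ge[OF _ finVM]) (rule lower)
  then show ?thesis using upper by simp
qed

end

context myc begin

lemma casei:
  assumes "card V = 1"
  shows "det_num V E = 0 \<and> det_num VM EM = t"
proof -
  obtain a where Va: "V = {a}" using assms card_1_singletonE by blast
  have aV: "a\<in>V" using Va by simp
  have En: "\<And>e. e\<notin>E"
  proof
    fix e assume "e\<in>E"
    then obtain u v where "u\<noteq>v" "u\<in>V" "v\<in>V" using sg unfolding simple_graph_def by blast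
    then show False using Va by auto
  qed
  have d0: "determining_set V E {}"
    unfolding determining_set_def graph_aut_def bij_betw_def using Va by auto
  have p1: "det_num V E = 0" using det_le[OF finV d0] by simp
  define S1 where "S1 = Some ` ({a}\<times>{1..t})"
  have cS1: "card S1 = t" unfolding S1_def by (simp add: card_image card_cartesian_product)
  have det1: "determining_set VM EM S1"
    unfolding determining_set_def
  proof (intro conjI allI impI)
    show "S1 \<subseteq> VM" unfolding S1_def using aV by auto
    fix f assume fa: "graph_aut VM EM f \<and> (\<forall>x\<in>S1. f x = x)"
    then have aut: "graph_aut VM EM f" by simp
    have fat: "f (Some(a,t)) = Some(a,t)" using fa t1 unfolding S1_def by auto
    have atV: "Some(a,t)\<in>VM" using aV by simp
    have "{Some(a,t), None}\<in>EM" using EM_SN aV by simp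
    then have "{f (Some(a,t)), f None}\<in>EM" using aut_edge[OF aut atV None_VM] by simp
    then have e: "{Some(a,t), f None}\<in>EM" using fat by simp
    have fN: "f None = None"
    proof (cases "f None")
      case None then show ?thesis .
    next
      case (Some p)
      then obtain v s where "f None = Some(v,s)" by (cases p) auto
      then show ?thesis using e EM_SS En by simp
    qed
    have fix_other: "\<And>x. x\<in>VM \<Longrightarrow> x \<noteq> Some(a,0) \<Longrightarrow> f x = x"
    proof -
      fix x assume x: "x\<in>VM" "x \<noteq> Some(a,0)"
      show "f x = x"
      proof (cases x)
        case None then show ?thesis using fN by simp
      next
        case (Some p)
        then obtain v s where xv: "x = Some(v,s)" by (cases p) auto
        then have "v\<in>V" "s \<le> t" using x by auto
        then have "v = a" "s \<le> t" "s \<noteq> 0" using x xv Va by auto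
        then have "x\<in>S1" unfolding S1_def using xv by auto
        then show ?thesis using fa by blast
      qed
    qed
    show "\<forall>x\<in>VM. f x = x"
    proof
      fix x assume x: "x\<in>VM"
      show "f x = x"
      proof (rule fix_unique[where A = VM])
        show "\<forall>x\<in>VM. f x \<in> VM" using aut_in[OF aut] by blast
        show "inj_on f VM" using aut_inj[OF aut] .
        show "\<forall>x\<in>VM. \<forall>y\<in>VM. x \<noteq> y \<longrightarrow> f x = x \<or> f y = y" using fix_other by blast
      qed (rule x)
    qed
  qed
  have up: "det_num VM EM \<le> t" using det_le[OF finVM det1] cS1 by simp
  have low: "t \<le> card S" if S: "determining_set VM EM S" for S
  proof -
    have SV: "S \<subseteq> VM" using S unfolding determining_set_def by auto
    have finS: "finite S" using SV finVM finite_subset by blast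
    define Iso where "Iso = Some ` ({a}\<times>{..<t})"
    define P where "P = {Some(a,t), None}"
    have cIso: "card Iso = t" unfolding Iso_def by (simp add: card_image card_cartesian_product)
    have nI: "\<And>z x. z\<in>VM \<Longrightarrow> x\<in>Iso \<Longrightarrow> {z,x}\<notin>EM"
    proof -
      fix z x assume zx: "z\<in>VM" "x\<in>Iso"
      then obtain s where x: "x = Some(a,s)" "s<t" unfolding Iso_def by auto
      show "{z,x}\<notin>EM"
      proof (cases z)
        case None then show ?thesis using x EM_NS by simp
      next
        case (Some p)
        then obtain v r where "z = Some(v,r)" by (cases p) auto
        then show ?thesis using x EM_SS En by simp
      qed
    qed
    have F1: "card Iso \<le> card (Iso\<inter>S) + 1"
    proof (rule cover_card)
      show "finite Iso" unfolding Iso_def by simp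
      show "\<forall>x\<in>Iso. \<forall>y\<in>Iso. x \<noteq> y \<longrightarrow> x \<in> S \<or> y \<in> S"
      proof (intro ballI impI)
        fix x y assume xy: "x\<in>Iso" "y\<in>Iso" "x\<noteq>y"
        show "x\<in>S \<or> y\<in>S"
        proof (rule det_cover[OF S])
          show "x\<in>VM" "y\<in>VM" using xy aV unfolding Iso_def by auto
          show "x\<noteq>y" by fact
          show "\<forall>z\<in>VM - {x, y}. ({z, x} \<in> EM) = ({z, y} \<in> EM)" using nI xy by blast
          show "\<forall>z. {z} \<notin> EM" using EM_noloop by blast
        qed
      qed
    qed
    have F2: "Some(a,t)\<in>S \<or> None\<in>S"
    proof (rule det_cover[OF S])
      show "Some(a,t)\<in>VM" "None\<in>VM" using aV by auto
      show "Some(a,t) \<noteq> None" by simp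
      show "\<forall>z\<in>VM - {Some(a,t), None}. ({z, Some(a,t)} \<in> EM) = ({z, None} \<in> EM)"
      proof
        fix z assume z: "z\<in>VM - {Some(a,t), None}"
        then obtain v s where zv: "z = Some(v,s)" by (cases z) auto
        then have "v\<in>V" "s\<le>t" using z by auto
        then have "v = a" "s < t" using z zv Va by auto
        then show "({z, Some(a,t)} \<in> EM) = ({z, None} \<in> EM)" using zv EM_SS EM_SN En by simp
      qed
      show "\<forall>z. {z} \<notin> EM" using EM_noloop by blast
    qed
    have "card (P\<inter>S) \<ge> 1" using F2 finS unfolding P_def
      by (metis IntI One_nat_def Suc_leI card_gt_0_iff empty_iff finite_Int insertCI)
    moreover have "(Iso\<inter>S) \<inter> (P\<inter>S) = {}" unfolding Iso_def P_def by auto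
    moreover have "card ((Iso\<inter>S) \<union> (P\<inter>S)) \<le> card S" by (rule card_mono[OF finS]) auto
    ultimately have "card (Iso\<inter>S) + 1 \<le> card S"
      using card_Un_disjoint[of "Iso\<inter>S" "P\<inter>S"] finS by simp
    then show ?thesis using F1 cIso by simp
  qed
  have "t \<le> det_num VM EM" by (rule det_ge[OF low finVM])
  then show ?thesis using up p1 by simp
qed

end

theorem mainTheorem9:
  fixes V :: "'a set" and E :: "'a set set" and T :: "'a set" and t :: nat
  assumes "simple_graph V E"
    and "\<exists>v. isolated_vertex V E v"
    and "min_twin_cover V E T"
    and "t \<ge> 1"
  shows "(card V = 1 \<longrightarrow>
            det_num V E = 0 \<and> det_num (myc_vertices t V) (myc_edges t V E) = t)
       \<and> (card V \<noteq> 1 \<longrightarrow>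
            det_num (myc_vertices t V) (myc_edges t V E) = t * card T + det_num V E + t - 1)"
proof -
  interpret myc V E t using assms(1,4) by unfold_locales
  show ?thesis
  proof (rule conjI; rule impI)
    assume "card V = 1"
    then show "det_num V E = 0 \<and> det_num (myc_vertices t V) (myc_edges t V E) = t" by (rule casei)
  next
    assume cv: "card V \<noteq> 1"
    interpret myc2 V E t T using assms(2,3) cv by unfold_locales
    show "det_num (myc_vertices t V) (myc_edges t V E) = t * card T + det_num V E + t - 1" by (rule caseii)
  qed
qed

end
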